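(* Let $1<p\le\infty$ and let $f:\mathbb{T}^{\infty}\to\mathbb{R}$ be a measurable function that is Lipschitz with respect to the metric $\mathrm{dist}_p$. Then there exists $a\in\mathbb{R}$ with the following property: for every $\varepsilon>0$ there exists a parallel infinite-dimensional subtorus $M\subseteq\mathbb{T}^{\infty}$ such that $\|f-a\|_{L^{\infty}(M)}<\varepsilon$.
   Context: $\mathbb{T}=\mathbb{R}/\mathbb{Z}$ and $\mathbb{T}^{\infty}=\mathbb{T}^{\mathbb{N}}$ is the set of sequences $x=(x_i)_{i\ge1}$ with $x_i\in\mathbb{T}$. Let $\sigma$ be the uniform probability measure on $\mathbb{T}^{\infty}$ (the complete product of Haar probability measures on the circle); "measurable" refers to $\sigma$. For $x,y\in\mathbb{T}^\infty$, $\mathrm{dist}_p(x,y)=\left(\sum_{i\ge1}\mathrm{dist}^p(x_i,y_i)\right)^{1/p}$ and $\mathrm{dist}_\infty(x,y)=\sup_i \mathrm{dist}(x_i,y_i)$, where $\mathrm{dist}(x_i,y_i)$ is the distance in the circle $\mathbb{R}/\mathbb{Z}$; these may equal $+\infty$. A parallel infinite-dimensional subtorus is a set $M=\{x\in\mathbb{T}^\infty:\ x_i=b_i \text{ for all } i\in\mathbb{N}\setminus A\}$ for some infinite $A\subseteq\mathbb{N}$ and some $b:\mathbb{N}\setminus A\to\mathbb{T}$; $M$ carries its uniform (product) probability measure, with respect to which $L^\infty(M)$ is taken. *)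

theory Defs
  imports "HOL-Probability.Probability"
begin

text \<open>The circle T = R/Z is represented by the half-open interval [0,1) of reals
  with the uniform (Lebesgue) probability measure; T^infinity by sequences
  nat => real with values in [0,1), carrying the product measure sigma.\<close>

definition circle_measure :: "real measure" where
  "circle_measure = restrict_space lborel {0..<1}"

definition torus_measure :: "(nat \<Rightarrow> real) measure" where
  "torus_measure = PiM UNIV (\<lambda>_. circle_measure)"

definition circ_dist :: "real \<Rightarrow> real \<Rightarrow> real" where
  "circ_dist s t = \<bar>(s - t) - of_int (round (s - t))\<bar>"

definition torus_dist :: "ereal \<Rightarrow> (nat \<Rightarrow> real) \<Rightarrow> (nat \<Rightarrow> real) \<Rightarrow> ennreal" where
  "torus_dist p x y =
     (if p = \<infinity> then (SUP i. ennreal (circ_dist (x i) (y i)))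
      else (let q = real_of_ereal p in
            if summable (\<lambda>i. circ_dist (x i) (y i) powr q)
            then ennreal ((\<Sum>i. circ_dist (x i) (y i) powr q) powr (1 / q))
            else \<infinity>))"

definition torus_lipschitz :: "ereal \<Rightarrow> ((nat \<Rightarrow> real) \<Rightarrow> real) \<Rightarrow> bool" where
  "torus_lipschitz p f \<longleftrightarrow>
     (\<exists>L::real. L \<ge> 0 \<and> (\<forall>x\<in>space torus_measure. \<forall>y\<in>space torus_measure.
        ennreal \<bar>f x - f y\<bar> \<le> ennreal L * torus_dist p x y))"

text \<open>The parallel subtorus M = {x. x i = b i for i not in A} is parametrised by
  T^A (with its product measure) via the embedding below.\<close>
definition sub_embed :: "nat set \<Rightarrow> (nat \<Rightarrow> real) \<Rightarrow> (nat \<Rightarrow> real) \<Rightarrow> (nat \<Rightarrow> real)" where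
  "sub_embed A b y = (\<lambda>i. if i \<in> A then y i else b i)"

definition is_parallel_subtorus :: "nat set \<Rightarrow> (nat \<Rightarrow> real) \<Rightarrow> bool" where
  "is_parallel_subtorus A b \<longleftrightarrow> infinite A \<and> (\<forall>i. i \<notin> A \<longrightarrow> b i \<in> {0..<1})"

text \<open>L^infinity(M) norm (essential supremum w.r.t. the uniform measure of M),
  defined via almost-everywhere bounds so it makes sense for any function.\<close>
definition subtorus_Linf_norm :: "nat set \<Rightarrow> (nat \<Rightarrow> real) \<Rightarrow> ((nat \<Rightarrow> real) \<Rightarrow> real) \<Rightarrow> ennreal" where
  "subtorus_Linf_norm A b g =
     Inf {c::ennreal. AE y in PiM A (\<lambda>_. circle_measure). ennreal \<bar>g (sub_embed A b y)\<bar> \<le> c}"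

end

theory Submission
  imports Defs
begin

lemma prob_circle: "prob_space circle_measure"
  unfolding circle_measure_def
  by (rule prob_space_restrict_space) auto

lemma space_circle: "space circle_measure = {0..<1}"
  unfolding circle_measure_def by (simp add: space_restrict_space)

interpretation T: product_prob_space "\<lambda>_::nat. circle_measure" UNIV
  by (simp add: product_prob_space_def product_sigma_finite_def product_prob_space_axioms_def prob_circle
      prob_space_imp_sigma_finite)

lemma prob_torus: "prob_space torus_measure"
  unfolding torus_measure_def by (rule prob_space_PiM) (rule prob_circle)

lemma space_torus: "space torus_measure = {x. \<forall>i. x i \<in> {0..<1}}"
  unfolding torus_measure_def by (auto simp: space_PiM space_circle PiE_def Pi_def)

lemma sub_embed_meas:
  "(\<lambda>z. sub_embed S (fst z) (snd z)) \<in> measurable (torus_measure \<Otimes>\<^sub>M torus_measure) torus_measure"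
  unfolding torus_measure_def sub_embed_def
proof (rule measurable_PiM_single')
  fix i :: nat
  show "(\<lambda>z. if i \<in> S then snd z i else fst z i) \<in> measurable (Pi\<^sub>M UNIV (\<lambda>_. circle_measure) \<Otimes>\<^sub>M Pi\<^sub>M UNIV (\<lambda>_. circle_measure)) circle_measure"
    by (cases "i \<in> S") auto
qed (auto simp: space_pair_measure space_PiM PiE_iff)

lemma sub_embed_distr:
  "distr (torus_measure \<Otimes>\<^sub>M torus_measure) torus_measure (\<lambda>z. sub_embed S (fst z) (snd z)) = torus_measure"
proof (rule measure_eqI_PiM_infinite[symmetric, where I=UNIV and M="\<lambda>_. circle_measure"])
  show "sets torus_measure = sets (Pi\<^sub>M UNIV (\<lambda>_. circle_measure))" by (simp add: torus_measure_def)
  show "sets (distr (torus_measure \<Otimes>\<^sub>M torus_measure) torus_measure (\<lambda>z. sub_embed S (fst z) (snd z))) = sets (Pi\<^sub>M UNIV (\<lambda>_. circle_measure))"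
    by (simp add: torus_measure_def)
  show "finite_measure torus_measure" using prob_torus prob_space.finite_measure by blast
  fix A J assume J: "finite (J::nat set)" "J \<subseteq> UNIV" and A: "\<And>i. i \<in> J \<Longrightarrow> A i \<in> sets circle_measure"
  let ?X = "prod_emb UNIV (\<lambda>_. circle_measure) J (Pi\<^sub>E J A)"
  let ?X1 = "prod_emb UNIV (\<lambda>_. circle_measure) (J - S) (Pi\<^sub>E (J - S) A)"
  let ?X2 = "prod_emb UNIV (\<lambda>_. circle_measure) (J \<inter> S) (Pi\<^sub>E (J \<inter> S) A)"
  interpret PT: pair_prob_space torus_measure torus_measure
    by (simp add: pair_prob_space_def pair_sigma_finite_def prob_torus prob_space_imp_sigma_finite)
  have X: "?X \<in> sets torus_measure" using J A unfolding torus_measure_def by (intro sets_PiM_I) auto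
  have X1: "?X1 \<in> sets torus_measure" using J A unfolding torus_measure_def by (intro sets_PiM_I) auto
  have X2: "?X2 \<in> sets torus_measure" using J A unfolding torus_measure_def by (intro sets_PiM_I) auto
  have pre: "(\<lambda>z. sub_embed S (fst z) (snd z)) -` ?X \<inter> space (torus_measure \<Otimes>\<^sub>M torus_measure) = ?X1 \<times> ?X2"
  proof (intro set_eqI iffI)
    fix z assume z: "z \<in> (\<lambda>z. sub_embed S (fst z) (snd z)) -` ?X \<inter> space (torus_measure \<Otimes>\<^sub>M torus_measure)"
    then have h: "\<And>i. i \<in> J \<Longrightarrow> sub_embed S (fst z) (snd z) i \<in> A i"
      by (auto simp: prod_emb_def PiE_iff)
    show "z \<in> ?X1 \<times> ?X2" using z h
      by (cases z) (auto simp: prod_emb_def space_pair_measure torus_measure_def space_PiM sub_embed_def PiE_iff)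
  next
    fix z assume "z \<in> ?X1 \<times> ?X2"
    then show "z \<in> (\<lambda>z. sub_embed S (fst z) (snd z)) -` ?X \<inter> space (torus_measure \<Otimes>\<^sub>M torus_measure)"
      by (cases z) (auto simp: prod_emb_def space_pair_measure torus_measure_def space_PiM sub_embed_def PiE_iff)
  qed
  have "emeasure torus_measure ?X = (\<Prod>i\<in>J. emeasure circle_measure (A i))"
    unfolding torus_measure_def using J A by (intro T.emeasure_PiM_emb) auto
  also have "\<dots> = (\<Prod>i\<in>J - S. emeasure circle_measure (A i)) * (\<Prod>i\<in>J \<inter> S. emeasure circle_measure (A i))"
  proof -
    have "J = (J - S) \<union> (J \<inter> S)" by blast
    then show ?thesis using J prod.union_disjoint[of "J - S" "J \<inter> S" "\<lambda>i. emeasure circle_measure (A i)"]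
      by (metis Diff_disjoint Int_Diff_disjoint finite_Diff finite_Int inf_commute)
  qed
  also have "\<dots> = emeasure torus_measure ?X1 * emeasure torus_measure ?X2"
    unfolding torus_measure_def using J A by (subst (1 2) T.emeasure_PiM_emb) auto
  also have "\<dots> = emeasure (torus_measure \<Otimes>\<^sub>M torus_measure) (?X1 \<times> ?X2)"
    using X1 X2 by (simp add: sigma_finite_measure.emeasure_pair_measure_Times[OF prob_space_imp_sigma_finite[OF prob_torus]])
  also have "\<dots> = emeasure (distr (torus_measure \<Otimes>\<^sub>M torus_measure) torus_measure (\<lambda>z. sub_embed S (fst z) (snd z))) ?X"
    using X by (simp add: emeasure_distr[OF sub_embed_meas] pre)
  finally show "emeasure torus_measure ?X = emeasure (distr (torus_measure \<Otimes>\<^sub>M torus_measure) torus_measure (\<lambda>z. sub_embed S (fst z) (snd z))) ?X" .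
qed

interpretation TP: prob_space torus_measure by (rule prob_torus)

definition dep :: "nat \<Rightarrow> (nat \<Rightarrow> real) set \<Rightarrow> bool" where
  "dep N C \<longleftrightarrow> (\<forall>x\<in>space torus_measure. \<forall>y\<in>space torus_measure. (\<forall>i<N. x i = y i) \<longrightarrow> (x \<in> C \<longleftrightarrow> y \<in> C))"

lemma dep_mono: "dep N C \<Longrightarrow> N \<le> M \<Longrightarrow> dep M C"
  unfolding dep_def by (meson order_less_le_trans)

lemma sets_torus: "sets torus_measure = sigma_sets (space torus_measure) (prod_algebra UNIV (\<lambda>_::nat. circle_measure))"
  unfolding torus_measure_def by (simp add: sets_PiM space_PiM)

definition approxable :: "(nat \<Rightarrow> real) set \<Rightarrow> bool" where
  "approxable A \<longleftrightarrow> (\<forall>e>0. \<exists>N C. C \<in> sets torus_measure \<and> dep N C \<and> measure torus_measure ((A - C) \<union> (C - A)) < e)"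

lemma approx_set: assumes "A \<in> sets torus_measure" shows "approxable A"
proof -
  have mem: "A \<in> sigma_sets (space torus_measure) (prod_algebra UNIV (\<lambda>_::nat. circle_measure))"
    using assms sets_torus by simp
  have IS: "Int_stable (prod_algebra UNIV (\<lambda>_::nat. circle_measure))" by (rule Int_stable_prod_algebra)
  have SU: "prod_algebra UNIV (\<lambda>_::nat. circle_measure) \<subseteq> Pow (space torus_measure)"
      using prod_algebra_sets_into_space unfolding torus_measure_def space_PiM .
  from IS SU mem show ?thesis
  proof (induction rule: sigma_sets_induct_disjoint)
    case (basic A)
    then obtain J E where A: "A = prod_emb UNIV (\<lambda>_. circle_measure) J (\<Pi>\<^sub>E j\<in>J. E j)" "finite J"
      "\<And>i. i \<in> J \<Longrightarrow> E i \<in> sets circle_measure" by (rule prod_algebraE) auto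
    obtain N where N: "J \<subseteq> {..<N}" using A(2) finite_nat_bounded by blast
    have As: "A \<in> sets torus_measure" using A unfolding torus_measure_def by (auto intro!: sets_PiM_I)
    have "dep N A" unfolding dep_def A(1) using N by (auto simp: prod_emb_def PiE_iff subset_eq space_torus space_circle)
    then show ?case unfolding approxable_def using As by (intro allI impI exI[of _ N] exI[of _ A]) auto
  next
    case empty
    show ?case unfolding approxable_def by (intro allI impI exI[of _ 0] exI[of _ "{}"]) (auto simp: dep_def)
  next
    case (compl A)
    show ?case unfolding approxable_def
    proof (intro allI impI)
      fix e :: real assume "e > 0"
      then obtain N C where C: "C \<in> sets torus_measure" "dep N C" "measure torus_measure ((A - C) \<union> (C - A)) < e"
        using compl.IH unfolding approxable_def by blast
      have Asub: "A \<subseteq> space torus_measure" using compl.hyps sets_torus sets.sets_into_space by blast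
      have Csub: "C \<subseteq> space torus_measure" using C(1) sets.sets_into_space by blast
      have eq: "((space torus_measure - A) - (space torus_measure - C)) \<union> ((space torus_measure - C) - (space torus_measure - A)) = (A - C) \<union> (C - A)"
        using Asub Csub by blast
      have "dep N (space torus_measure - C)" using C(2) unfolding dep_def by blast
      then show "\<exists>N C'. C' \<in> sets torus_measure \<and> dep N C' \<and> measure torus_measure (((space torus_measure - A) - C') \<union> (C' - (space torus_measure - A))) < e"
        using C eq by (intro exI[of _ N] exI[of _ "space torus_measure - C"]) auto
    qed
  next
    case (union A)
    have As: "\<And>i. A i \<in> sets torus_measure" using union.hyps(2) sets_torus by auto
    show ?case unfolding approxable_def
    proof (intro allI impI)
      fix e :: real assume e: "e > 0"
      have sums: "(\<lambda>i. measure torus_measure (A i)) sums measure torus_measure (\<Union>i. A i)"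
        using As union.hyps(1) by (intro TP.finite_measure_UNION) auto
      then have "(\<lambda>n. \<Sum>i<n. measure torus_measure (A i)) \<longlonglongrightarrow> measure torus_measure (\<Union>i. A i)"
        by (simp add: sums_def)
      from LIMSEQ_D[OF this, of "e/2"] e obtain n0 where
        "\<forall>n\<ge>n0. norm ((\<Sum>i<n. measure torus_measure (A i)) - measure torus_measure (\<Union>i. A i)) < e/2" by auto
      then have n: "\<bar>(\<Sum>i<n0. measure torus_measure (A i)) - measure torus_measure (\<Union>i. A i)\<bar> < e/2" by auto
      define n where "n = n0"
      have n: "\<bar>(\<Sum>i<n. measure torus_measure (A i)) - measure torus_measure (\<Union>i. A i)\<bar> < e/2" using n n_def by simp
      have "\<forall>i. \<exists>NC. fst NC \<in> sets torus_measure \<and> dep (snd NC) (fst NC) \<and> measure torus_measure ((A i - fst NC) \<union> (fst NC - A i)) < e / (2 * (real n + 1))"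
      proof
        fix i
        have "e / (2 * (real n + 1)) > 0" using e by simp
        then obtain N C where "C \<in> sets torus_measure" "dep N C" "measure torus_measure ((A i - C) \<union> (C - A i)) < e / (2 * (real n + 1))"
          using union.IH[of i] unfolding approxable_def by blast
        then show "\<exists>NC. fst NC \<in> sets torus_measure \<and> dep (snd NC) (fst NC) \<and> measure torus_measure ((A i - fst NC) \<union> (fst NC - A i)) < e / (2 * (real n + 1))"
          by (intro exI[of _ "(C, N)"]) auto
      qed
      then obtain NC where NC: "\<And>i. fst (NC i) \<in> sets torus_measure" "\<And>i. dep (snd (NC i)) (fst (NC i))"
        "\<And>i. measure torus_measure ((A i - fst (NC i)) \<union> (fst (NC i) - A i)) < e / (2 * (real n + 1))"
        by metis
      define C where "C = (\<Union>i<n. fst (NC i))"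
      define N where "N = (\<Sum>i<n. snd (NC i))"
      have Cs: "C \<in> sets torus_measure" unfolding C_def using NC(1) by auto
      have depC: "dep N C"
        unfolding dep_def C_def
      proof (intro ballI impI)
        fix x y assume x: "x \<in> space torus_measure" and y: "y \<in> space torus_measure" and xy: "\<forall>i<N. x i = y i"
        have "\<And>i. i < n \<Longrightarrow> (x \<in> fst (NC i) \<longleftrightarrow> y \<in> fst (NC i))"
        proof -
          fix i assume "i < n"
          then have "snd (NC i) \<le> N" unfolding N_def by (intro member_le_sum) auto
          then have "dep N (fst (NC i))" using NC(2) dep_mono by blast
          then show "x \<in> fst (NC i) \<longleftrightarrow> y \<in> fst (NC i)" using x y xy unfolding dep_def by blast
        qed
        then show "(x \<in> (\<Union>i<n. fst (NC i))) = (y \<in> (\<Union>i<n. fst (NC i)))" by blast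
      qed
      let ?U = "\<Union>i. A i"
      let ?Un = "\<Union>i<n. A i"
      have Us: "?U \<in> sets torus_measure" using As by auto
      have Uns: "?Un \<in> sets torus_measure" using As by auto
      have sub: "(?U - C) \<union> (C - ?U) \<subseteq> (?U - ?Un) \<union> (\<Union>i<n. (A i - fst (NC i)) \<union> (fst (NC i) - A i))"
        unfolding C_def by blast
      have m1: "measure torus_measure (?U - ?Un) < e/2"
      proof -
        have "measure torus_measure (?U - ?Un) = measure torus_measure ?U - measure torus_measure ?Un"
          using Us Uns by (intro TP.finite_measure_Diff) auto
        also have "measure torus_measure ?Un = (\<Sum>i<n. measure torus_measure (A i))"
          using As union.hyps(1) by (intro TP.finite_measure_finite_Union) (auto simp: disjoint_family_on_def)
        finally show ?thesis using n by linarith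
      qed
      have m2: "measure torus_measure (\<Union>i<n. (A i - fst (NC i)) \<union> (fst (NC i) - A i)) \<le> (\<Sum>i<n. measure torus_measure ((A i - fst (NC i)) \<union> (fst (NC i) - A i)))"
        using As NC(1) by (intro TP.finite_measure_subadditive_finite) auto
      have m3: "(\<Sum>i<n. measure torus_measure ((A i - fst (NC i)) \<union> (fst (NC i) - A i))) \<le> (\<Sum>i<n. e / (2 * (real n + 1)))"
        using NC(3) by (intro sum_mono) (simp add: less_imp_le)
      have m4: "(\<Sum>i<n. e / (2 * (real n + 1))) < e/2"
        using e by (simp add: field_simps)
      have "measure torus_measure ((?U - C) \<union> (C - ?U)) \<le> measure torus_measure ((?U - ?Un) \<union> (\<Union>i<n. (A i - fst (NC i)) \<union> (fst (NC i) - A i)))"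
        using sub As NC(1) by (intro TP.finite_measure_mono) auto
      also have "\<dots> \<le> measure torus_measure (?U - ?Un) + measure torus_measure (\<Union>i<n. (A i - fst (NC i)) \<union> (fst (NC i) - A i))"
        using As NC(1) by (intro measure_subadditive) (auto simp: TP.emeasure_eq_measure)
      finally have "measure torus_measure ((?U - C) \<union> (C - ?U)) < e" using m1 m2 m3 m4 by linarith
      then show "\<exists>N C. C \<in> sets torus_measure \<and> dep N C \<and> measure torus_measure ((?U - C) \<union> (C - ?U)) < e"
        using Cs depC by blast
    qed
  qed
qed

lemma grid_point:
  fixes u v K d :: real
  assumes "d > 0" "\<bar>v\<bar> \<le> K" "v + 2 * d \<le> u"
  shows "\<exists>m::nat. m \<le> nat \<lceil>2 * K / d\<rceil> + 1 \<and> v < - K + real m * d \<and> - K + real m * d \<le> u"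
proof -
  define k where "k = \<lfloor>(v + K) / d\<rfloor>"
  have k0: "0 \<le> k" unfolding k_def using assms by simp
  have k1: "real_of_int k \<le> (v + K) / d" "(v + K) / d < real_of_int k + 1" unfolding k_def by linarith+
  have k2: "real_of_int k * d \<le> v + K" "v + K < (real_of_int k + 1) * d"
    using k1 assms(1) by (simp_all add: field_simps)
  define m where "m = nat k + 1"
  have rm: "real m = real_of_int k + 1" unfolding m_def using k0 by simp
  have "v < - K + real m * d" using k2 rm by (simp add: algebra_simps)
  moreover have "- K + real m * d \<le> u" using k2 rm assms by (simp add: algebra_simps)
  moreover have "m \<le> nat \<lceil>2 * K / d\<rceil> + 1"
  proof -
    have "(v + K) / d \<le> 2 * K / d" using assms by (simp add: divide_right_mono)
    then have "k \<le> \<lceil>2 * K / d\<rceil>" using k1 by (meson ceiling_correct floor_le_ceiling k_def le_floor_iff order.trans)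
    then show ?thesis unfolding m_def using k0 by linarith
  qed
  ultimately show ?thesis by blast
qed

lemma approx_fun:
  fixes G :: "(nat \<Rightarrow> real) \<Rightarrow> real"
  assumes G: "G \<in> borel_measurable torus_measure" and bnd: "\<And>x. \<bar>G x\<bar> \<le> K"
    and th: "\<theta> > 0" and ka: "\<kappa> > 0"
  shows "\<exists>N. \<forall>(\<Omega>::'a measure) \<phi> \<psi>. \<phi> \<in> measurable \<Omega> torus_measure \<longrightarrow> \<psi> \<in> measurable \<Omega> torus_measure \<longrightarrow>
     distr \<Omega> torus_measure \<phi> = torus_measure \<longrightarrow> distr \<Omega> torus_measure \<psi> = torus_measure \<longrightarrow>
     (\<forall>\<omega>\<in>space \<Omega>. \<forall>i<N. \<phi> \<omega> i = \<psi> \<omega> i) \<longrightarrow>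
     emeasure \<Omega> {\<omega>\<in>space \<Omega>. \<theta> \<le> \<bar>G (\<phi> \<omega>) - G (\<psi> \<omega>)\<bar>} \<le> ennreal \<kappa>"
proof -
  define d where "d = \<theta> / 2"
  have d: "d > 0" using th by (simp add: d_def)
  define M where "M = nat \<lceil>2 * K / d\<rceil> + 1"
  define E where "E m = {x \<in> space torus_measure. - K + real m * d \<le> G x}" for m :: nat
  have Es: "E m \<in> sets torus_measure" for m unfolding E_def using G by measurable
  define e where "e = \<kappa> / (2 * (real M + 1))"
  have e: "e > 0" using ka by (simp add: e_def)
  have "\<forall>m. \<exists>NC. fst NC \<in> sets torus_measure \<and> dep (snd NC) (fst NC) \<and> measure torus_measure ((E m - fst NC) \<union> (fst NC - E m)) < e"
  proof
    fix m
    obtain N C where "C \<in> sets torus_measure" "dep N C" "measure torus_measure ((E m - C) \<union> (C - E m)) < e"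
      using approx_set[OF Es[of m]] e unfolding approxable_def by blast
    then show "\<exists>NC. fst NC \<in> sets torus_measure \<and> dep (snd NC) (fst NC) \<and> measure torus_measure ((E m - fst NC) \<union> (fst NC - E m)) < e"
      by (intro exI[of _ "(C, N)"]) auto
  qed
  then obtain NC where NC: "\<And>m. fst (NC m) \<in> sets torus_measure" "\<And>m. dep (snd (NC m)) (fst (NC m))"
    "\<And>m. measure torus_measure ((E m - fst (NC m)) \<union> (fst (NC m) - E m)) < e"
    by metis
  define N where "N = (\<Sum>m\<le>M. snd (NC m))"
  define D where "D m = (E m - fst (NC m)) \<union> (fst (NC m) - E m)" for m
  have Ds: "D m \<in> sets torus_measure" for m unfolding D_def using Es NC(1) by auto
  show ?thesis
  proof (intro exI[of _ N] allI impI)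
    fix \<Omega> :: "'a measure" and \<phi> \<psi>
    assume phi: "\<phi> \<in> measurable \<Omega> torus_measure" and psi: "\<psi> \<in> measurable \<Omega> torus_measure"
      and dphi: "distr \<Omega> torus_measure \<phi> = torus_measure" and dpsi: "distr \<Omega> torus_measure \<psi> = torus_measure"
      and agree: "\<forall>\<omega>\<in>space \<Omega>. \<forall>i<N. \<phi> \<omega> i = \<psi> \<omega> i"
    define B where "B m = (\<phi> -` D m \<inter> space \<Omega>) \<union> (\<psi> -` D m \<inter> space \<Omega>)" for m
    have Bs: "B m \<in> sets \<Omega>" for m unfolding B_def using phi psi Ds by (auto intro: measurable_sets)
    have sub: "{\<omega>\<in>space \<Omega>. \<theta> \<le> \<bar>G (\<phi> \<omega>) - G (\<psi> \<omega>)\<bar>} \<subseteq> (\<Union>m\<in>{..M}. B m)"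
    proof
      fix \<omega> assume w: "\<omega> \<in> {\<omega>\<in>space \<Omega>. \<theta> \<le> \<bar>G (\<phi> \<omega>) - G (\<psi> \<omega>)\<bar>}"
      then have ws: "\<omega> \<in> space \<Omega>" and big: "\<theta> \<le> \<bar>G (\<phi> \<omega>) - G (\<psi> \<omega>)\<bar>" by auto
      have ps: "\<phi> \<omega> \<in> space torus_measure" "\<psi> \<omega> \<in> space torus_measure"
        using ws phi psi by (auto simp: measurable_def)
      have key: "\<exists>m\<le>M. (\<phi> \<omega> \<in> E m) \<noteq> (\<psi> \<omega> \<in> E m)"
      proof (cases "G (\<psi> \<omega>) \<le> G (\<phi> \<omega>)")
        case True
        then have "G (\<psi> \<omega>) + 2 * d \<le> G (\<phi> \<omega>)" using big by (simp add: d_def)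
        then obtain m where "m \<le> M" "G (\<psi> \<omega>) < - K + real m * d" "- K + real m * d \<le> G (\<phi> \<omega>)"
          using grid_point[OF d bnd] unfolding M_def by blast
        then show ?thesis using ps unfolding E_def by auto
      next
        case False
        then have "G (\<phi> \<omega>) + 2 * d \<le> G (\<psi> \<omega>)" using big by (simp add: d_def)
        then obtain m where "m \<le> M" "G (\<phi> \<omega>) < - K + real m * d" "- K + real m * d \<le> G (\<psi> \<omega>)"
          using grid_point[OF d bnd] unfolding M_def by blast
        then show ?thesis using ps unfolding E_def by auto
      qed
      then obtain m where m: "m \<le> M" "(\<phi> \<omega> \<in> E m) \<noteq> (\<psi> \<omega> \<in> E m)" by blast
      have "snd (NC m) \<le> N" unfolding N_def using m(1) by (intro member_le_sum) auto
      then have "dep N (fst (NC m))" using NC(2) dep_mono by blast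
      then have "\<phi> \<omega> \<in> fst (NC m) \<longleftrightarrow> \<psi> \<omega> \<in> fst (NC m)" using ps agree ws unfolding dep_def by blast
      then have "\<phi> \<omega> \<in> D m \<or> \<psi> \<omega> \<in> D m" using m(2) unfolding D_def by blast
      then show "\<omega> \<in> (\<Union>m\<in>{..M}. B m)" using m(1) ws unfolding B_def by auto
    qed
    have "emeasure \<Omega> {\<omega>\<in>space \<Omega>. \<theta> \<le> \<bar>G (\<phi> \<omega>) - G (\<psi> \<omega>)\<bar>} \<le> emeasure \<Omega> (\<Union>m\<in>{..M}. B m)"
      using sub Bs by (intro emeasure_mono) auto
    also have "\<dots> \<le> (\<Sum>m\<in>{..M}. emeasure \<Omega> (B m))"
      using Bs by (intro emeasure_subadditive_finite) auto
    also have "\<dots> \<le> (\<Sum>m\<in>{..M}. ennreal (2 * e))"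
    proof (intro sum_mono)
      fix m
      have "emeasure \<Omega> (B m) \<le> emeasure \<Omega> (\<phi> -` D m \<inter> space \<Omega>) + emeasure \<Omega> (\<psi> -` D m \<inter> space \<Omega>)"
        unfolding B_def using phi psi Ds by (intro emeasure_subadditive) (auto intro: measurable_sets)
      also have "emeasure \<Omega> (\<phi> -` D m \<inter> space \<Omega>) = emeasure torus_measure (D m)"
        using emeasure_distr[OF phi Ds[of m]] dphi by simp
      also have "emeasure \<Omega> (\<psi> -` D m \<inter> space \<Omega>) = emeasure torus_measure (D m)"
        using emeasure_distr[OF psi Ds[of m]] dpsi by simp
      also have "emeasure torus_measure (D m) = ennreal (measure torus_measure (D m))"
        by (simp add: TP.emeasure_eq_measure)
      also have "ennreal (measure torus_measure (D m)) + ennreal (measure torus_measure (D m)) \<le> ennreal (2 * e)"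
        using NC(3)[of m] unfolding D_def by (simp add: ennreal_plus[symmetric] del: ennreal_plus) (intro ennreal_leI, simp)
      finally show "emeasure \<Omega> (B m) \<le> ennreal (2 * e)" .
    qed
    also have "\<dots> = ennreal (real (Suc M) * (2 * e))" using e by (simp add: ennreal_of_nat_eq_real_of_nat ennreal_mult)
    also have "real (Suc M) * (2 * e) = \<kappa>" unfolding e_def by (simp add: field_simps)
    finally show "emeasure \<Omega> {\<omega>\<in>space \<Omega>. \<theta> \<le> \<bar>G (\<phi> \<omega>) - G (\<psi> \<omega>)\<bar>} \<le> ennreal \<kappa>" .
  qed
qed

lemma circ_dist_nonneg: "0 \<le> circ_dist s t" unfolding circ_dist_def by simp

lemma circ_dist_self: "circ_dist s s = 0" unfolding circ_dist_def by simp

lemma circ_dist_le: "circ_dist s t \<le> \<bar>s - t\<bar>"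
proof (cases "\<bar>s - t\<bar> < 1/2")
  case True
  have h: "-(1/2) < s - t" "s - t < 1/2" using True abs_less_iff[of "s-t" "1/2"] by linarith+
  have "round (s - t) = 0" unfolding round_def using h by (intro floor_unique) simp_all
  then show ?thesis unfolding circ_dist_def by simp
next
  case False
  have "\<bar>of_int (round (s - t)) - (s - t)\<bar> \<le> 1/2" by (rule of_int_round_abs_le)
  then show ?thesis using False unfolding circ_dist_def by linarith
qed

lemma sum_powr_le:
  fixes d :: "nat \<Rightarrow> real" and q :: real
  assumes Q: "finite Q" and d: "\<And>i. 0 \<le> d i" and q: "1 \<le> q"
  shows "(\<Sum>i\<in>Q. d i powr q) powr (1/q) \<le> (\<Sum>i\<in>Q. d i)"
proof -
  define D where "D = (\<Sum>i\<in>Q. d i)"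
  have D0: "0 \<le> D" unfolding D_def using d by (simp add: sum_nonneg)
  have le: "d i \<le> D" if "i \<in> Q" for i unfolding D_def using Q d that by (intro member_le_sum) auto
  have "(\<Sum>i\<in>Q. d i powr q) \<le> (\<Sum>i\<in>Q. d i * D powr (q - 1))"
  proof (intro sum_mono)
    fix i assume i: "i \<in> Q"
    have "d i powr q = d i * d i powr (q - 1)"
      using d[of i] q by (cases "d i = 0") (auto simp: powr_mult_base)
    also have "\<dots> \<le> d i * D powr (q - 1)"
      using d[of i] le[OF i] q by (cases "d i = 0") (auto intro!: mult_left_mono powr_mono2)
    finally show "d i powr q \<le> d i * D powr (q - 1)" .
  qed
  also have "\<dots> = D * D powr (q - 1)" unfolding D_def by (simp add: sum_distrib_right)
  also have "\<dots> = D powr q"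
    using D0 q by (cases "D = 0") (auto simp: powr_mult_base)
  finally have "(\<Sum>i\<in>Q. d i powr q) \<le> D powr q" .
  then have "(\<Sum>i\<in>Q. d i powr q) powr (1/q) \<le> (D powr q) powr (1/q)"
    using q d by (intro powr_mono2) (auto intro: sum_nonneg)
  also have "\<dots> = D" using D0 q by (simp add: powr_powr)
  finally show ?thesis unfolding D_def .
qed

lemma torus_dist_finite:
  assumes p: "1 < p" and Q: "finite Q" and xy: "\<And>i. i \<notin> Q \<Longrightarrow> x i = y i"
  shows "torus_dist p x y \<le> ennreal (\<Sum>i\<in>Q. circ_dist (x i) (y i))"
proof (cases "p = \<infinity>")
  case True
  have "ennreal (circ_dist (x i) (y i)) \<le> ennreal (\<Sum>i\<in>Q. circ_dist (x i) (y i))" for i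
  proof (cases "i \<in> Q")
    case True
    then show ?thesis using Q by (intro ennreal_leI member_le_sum) (auto simp: circ_dist_nonneg)
  next
    case False
    then show ?thesis using xy[OF False] by (simp add: circ_dist_self)
  qed
  then show ?thesis unfolding torus_dist_def using True by (simp add: SUP_le_iff)
next
  case False
  define q where "q = real_of_ereal p"
  have q: "1 < q" using p False unfolding q_def
    by (cases p) auto
  have z: "circ_dist (x i) (y i) powr q = 0" if "i \<notin> Q" for i using xy[OF that] by (simp add: circ_dist_self)
  have sm: "summable (\<lambda>i. circ_dist (x i) (y i) powr q)" using Q z by (intro summable_finite) auto
  have si: "(\<Sum>i. circ_dist (x i) (y i) powr q) = (\<Sum>i\<in>Q. circ_dist (x i) (y i) powr q)"
    using Q z by (intro suminf_finite) auto
  have "(\<Sum>i\<in>Q. circ_dist (x i) (y i) powr q) powr (1/q) \<le> (\<Sum>i\<in>Q. circ_dist (x i) (y i))"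
    using Q q by (intro sum_powr_le) (auto simp: circ_dist_nonneg)
  then show ?thesis unfolding torus_dist_def using False sm si q_def[symmetric] by (simp add: Let_def ennreal_leI)
qed

lemma lipschitz_finite:
  assumes p: "1 < p" and L: "L \<ge> 0" and lip: "\<forall>x\<in>space torus_measure. \<forall>y\<in>space torus_measure.
        ennreal \<bar>f x - f y\<bar> \<le> ennreal L * torus_dist p x y"
    and x: "x \<in> space torus_measure" and y: "y \<in> space torus_measure"
    and Q: "finite Q" and xy: "\<And>i. i \<notin> Q \<Longrightarrow> x i = y i"
  shows "\<bar>f x - f y\<bar> \<le> L * (\<Sum>i\<in>Q. circ_dist (x i) (y i))"
proof -
  have "ennreal \<bar>f x - f y\<bar> \<le> ennreal L * torus_dist p x y" using lip x y by blast
  also have "\<dots> \<le> ennreal L * ennreal (\<Sum>i\<in>Q. circ_dist (x i) (y i))"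
    by (intro mult_left_mono torus_dist_finite[OF p Q xy]) auto
  also have "\<dots> = ennreal (L * (\<Sum>i\<in>Q. circ_dist (x i) (y i)))" using L by (simp add: ennreal_mult sum_nonneg circ_dist_nonneg)
  finally show ?thesis using L by (simp add: ennreal_le_iff sum_nonneg circ_dist_nonneg)
qed

lemma circle_ball_measure:
  assumes c: "c \<in> {0..<1}" and r: "r > 0"
  shows "ennreal (min r (1/2)) \<le> emeasure circle_measure {t \<in> {0..<1}. circ_dist t c < r}"
proof -
  define m where "m = min r (1/2)"
  have m: "0 < m" "m \<le> r" "m \<le> 1/2" using r unfolding m_def by auto
  have S: "{t \<in> {0..<1}. circ_dist t c < r} \<in> sets borel" unfolding circ_dist_def round_def by measurable
  have eq: "emeasure circle_measure {t \<in> {0..<1}. circ_dist t c < r} = emeasure lborel {t \<in> {0..<1}. circ_dist t c < r}"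
    unfolding circle_measure_def using S by (subst emeasure_restrict_space) auto
  show ?thesis
  proof (cases "c + m \<le> 1")
    case True
    have "{c..<c+m} \<subseteq> {t \<in> {0..<1}. circ_dist t c < r}"
      using c True m by (auto intro: le_less_trans[OF circ_dist_le])
    then have "emeasure lborel {c..<c+m} \<le> emeasure lborel {t \<in> {0..<1}. circ_dist t c < r}"
      using S by (intro emeasure_mono) auto
    then show ?thesis using eq m unfolding m_def by simp
  next
    case False
    have "{c-m<..c} \<subseteq> {t \<in> {0..<1}. circ_dist t c < r}"
      using c False m by (auto intro: le_less_trans[OF circ_dist_le])
    then have "emeasure lborel {c-m<..c} \<le> emeasure lborel {t \<in> {0..<1}. circ_dist t c < r}"
      using S by (intro emeasure_mono) auto
    then show ?thesis using eq m unfolding m_def by simp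
  qed
qed

lemma box_measure:
  assumes Q: "finite Q" and c: "c \<in> space torus_measure" and r: "r > 0"
  shows "ennreal (min r (1/2) ^ card Q) \<le> emeasure torus_measure {y \<in> space torus_measure. \<forall>i\<in>Q. circ_dist (y i) (c i) < r}"
proof -
  let ?S = "\<lambda>i. {t \<in> {0..<1}. circ_dist t (c i) < r}"
  have Ss: "?S i \<in> sets circle_measure" for i
    unfolding circle_measure_def circ_dist_def round_def by (simp add: sets_restrict_space_iff) (measurable, auto)
  have eq: "{y \<in> space torus_measure. \<forall>i\<in>Q. circ_dist (y i) (c i) < r} = prod_emb UNIV (\<lambda>_. circle_measure) Q (Pi\<^sub>E Q ?S)"
    by (auto simp: prod_emb_def space_torus PiE_iff space_circle torus_measure_def space_PiM)
  have "emeasure torus_measure (prod_emb UNIV (\<lambda>_. circle_measure) Q (Pi\<^sub>E Q ?S)) = (\<Prod>i\<in>Q. emeasure circle_measure (?S i))"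
    unfolding torus_measure_def using Q Ss by (intro T.emeasure_PiM_emb) auto
  also have "\<dots> \<ge> (\<Prod>i\<in>Q. ennreal (min r (1/2)))"
    using c r by (intro prod_mono_ennreal circle_ball_measure) (auto simp: space_torus)
  finally show ?thesis using eq r by (simp add: prod_ennreal[symmetric] ennreal_power)
qed

lemma sub_embed_meas1:
  assumes x: "x \<in> space torus_measure"
  shows "(\<lambda>y. sub_embed S x y) \<in> measurable torus_measure torus_measure"
  unfolding sub_embed_def torus_measure_def
proof (rule measurable_PiM_single')
  fix i :: nat
  show "(\<lambda>y. if i \<in> S then y i else x i) \<in> measurable (Pi\<^sub>M UNIV (\<lambda>_. circle_measure)) circle_measure"
    using x by (cases "i \<in> S") (auto simp: space_torus space_circle)
qed (use x in \<open>auto simp: space_PiM PiE_iff space_torus space_circle\<close>)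

lemma sub_embed_measA:
  assumes x: "x \<in> space torus_measure"
  shows "(\<lambda>z. sub_embed A x z) \<in> measurable (Pi\<^sub>M A (\<lambda>_. circle_measure)) torus_measure"
  unfolding sub_embed_def torus_measure_def
proof (rule measurable_PiM_single')
  fix i :: nat
  show "(\<lambda>z. if i \<in> A then z i else x i) \<in> measurable (Pi\<^sub>M A (\<lambda>_. circle_measure)) circle_measure"
    using x by (cases "i \<in> A") (auto simp: space_torus space_circle)
qed (use x in \<open>auto simp: space_PiM PiE_iff space_torus space_circle\<close>)

lemma sub_embed_space:
  "x \<in> space torus_measure \<Longrightarrow> y \<in> space torus_measure \<Longrightarrow> sub_embed S x y \<in> space torus_measure"
  by (auto simp: space_torus sub_embed_def)

lemma sub_embed_empty[simp]: "sub_embed {} x y = x"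
  by (simp add: sub_embed_def)

lemma support_point:
  fixes G0 :: "(nat \<Rightarrow> real) \<Rightarrow> real"
  assumes G0: "G0 \<in> borel_measurable torus_measure"
  shows "\<exists>a. \<forall>e>0. emeasure torus_measure {x\<in>space torus_measure. \<bar>G0 x - a\<bar> < e} > 0"
proof (rule ccontr)
  assume "\<not> ?thesis"
  then have H: "\<forall>a. \<exists>e>0. emeasure torus_measure {x\<in>space torus_measure. \<bar>G0 x - a\<bar> < e} = 0"
    by (auto simp: not_less)
  define \<F> where "\<F> = {ball a e | a e. e > 0 \<and> emeasure torus_measure {x\<in>space torus_measure. \<bar>G0 x - a\<bar> < e} = 0}"
  have op: "\<And>S. S \<in> \<F> \<Longrightarrow> open S" unfolding \<F>_def by auto
  obtain \<F>' where F': "\<F>' \<subseteq> \<F>" "countable \<F>'" "\<Union>\<F>' = \<Union>\<F>" using Lindelof[OF op] by metis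
  have cov: "\<Union>\<F> = UNIV"
  proof -
    have "t \<in> \<Union>\<F>" for t
    proof -
      obtain e where "e > 0" "emeasure torus_measure {x\<in>space torus_measure. \<bar>G0 x - t\<bar> < e} = 0" using H by blast
      then show ?thesis unfolding \<F>_def by (auto intro!: exI[of _ "ball t e"])
    qed
    then show ?thesis by auto
  qed
  have null: "G0 -` S \<inter> space torus_measure \<in> null_sets torus_measure" if "S \<in> \<F>'" for S
  proof -
    obtain a e where S: "S = ball a e" "e > 0" "emeasure torus_measure {x\<in>space torus_measure. \<bar>G0 x - a\<bar> < e} = 0"
      using F'(1) \<open>S \<in> \<F>'\<close> unfolding \<F>_def by blast
    have eq: "G0 -` S \<inter> space torus_measure = {x\<in>space torus_measure. \<bar>G0 x - a\<bar> < e}"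
      using S by (auto simp: dist_real_def abs_minus_commute)
    show ?thesis unfolding eq using S G0 by (auto simp: null_sets_def)
  qed
  have "(\<Union>S\<in>\<F>'. G0 -` S \<inter> space torus_measure) \<in> null_sets torus_measure"
    using F'(2) null by (intro null_sets_UN') auto
  moreover have "(\<Union>S\<in>\<F>'. G0 -` S \<inter> space torus_measure) = space torus_measure"
  proof -
    have "\<And>x. \<exists>S\<in>\<F>'. G0 x \<in> S" using F'(3) cov by (metis UNIV_I Union_iff)
    then show ?thesis by auto
  qed
  ultimately show False using TP.emeasure_space_1 by (simp add: null_sets_def)
qed

lemma geom_partial: "(\<Sum>j<J. e / 8 * (1/2::real)^j) < e / 4" if "e > 0" for e :: real
proof -
  have "(\<Sum>j<J. (1/2::real)^j) = ((1/2)^J - 1) / (1/2 - 1)"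
    by (rule geometric_sum) simp
  then have "(\<Sum>j<J. (1/2::real)^j) < 2" by simp
  then have "(\<Sum>j<J. e / 8 * (1/2::real)^j) = e / 8 * (\<Sum>j<J. (1/2::real)^j)" by (simp add: sum_distrib_left)
  also have "\<dots> < e / 8 * 2" using \<open>(\<Sum>j<J. (1/2::real)^j) < 2\<close> that by (intro mult_strict_left_mono) auto
  finally show ?thesis by simp
qed

lemma absarith:
  fixes a a0 b b0 d s :: real
  assumes "\<bar>a - a0\<bar> \<le> d" "\<bar>b - b0\<bar> \<le> d" "d \<le> s / 4" "s \<le> \<bar>a0 - b0\<bar>"
  shows "s / 2 \<le> \<bar>a - b\<bar>"
  using assms by (simp add: abs_le_iff abs_if split: if_split_asm) linarith?

context
  fixes F G :: "(nat \<Rightarrow> real) \<Rightarrow> real" and N0 :: "(nat \<Rightarrow> real) set" and L K :: real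
  assumes L: "0 \<le> L"
    and lipF: "\<And>x y Q. x \<in> space torus_measure \<Longrightarrow> y \<in> space torus_measure \<Longrightarrow> finite Q \<Longrightarrow>
        (\<And>i. i \<notin> Q \<Longrightarrow> x i = y i) \<Longrightarrow> \<bar>F x - F y\<bar> \<le> L * (\<Sum>i\<in>Q. circ_dist (x i) (y i))"
    and Gm[measurable]: "G \<in> borel_measurable torus_measure" and Gb: "\<And>x. \<bar>G x\<bar> \<le> K"
    and N0: "N0 \<in> null_sets torus_measure"
    and FG: "\<And>x. x \<in> space torus_measure \<Longrightarrow> x \<notin> N0 \<Longrightarrow> F x = G x"
begin

lemma sup_step:
  fixes S T :: "nat set" and x :: "nat \<Rightarrow> real" and sj rj bj :: real
  assumes x: "x \<in> space torus_measure" and fin: "finite S" and TS: "T \<subseteq> S"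
    and sj: "sj > 0" and rj: "rj = sj / (4 * (L + 1) * real (card S))" and bj: "bj = min rj (1/2) ^ card S"
    and V: "emeasure torus_measure {y\<in>space torus_measure. sj / 2 \<le> \<bar>G (sub_embed S x y) - G (sub_embed T x y)\<bar>} < ennreal bj"
    and ae: "AE y in torus_measure. sub_embed S x y \<notin> N0 \<and> sub_embed T x y \<notin> N0"
    and y0: "y0 \<in> space torus_measure"
  shows "\<bar>F (sub_embed S x y0) - F (sub_embed T x y0)\<bar> < sj"
proof (rule ccontr)
  assume "\<not> ?thesis"
  then have big: "sj \<le> \<bar>F (sub_embed S x y0) - F (sub_embed T x y0)\<bar>" by simp
  have cS: "card S > 0"
  proof (rule ccontr)
    assume "\<not> card S > 0"
    then have "S = {}" using fin by auto
    then have "T = {}" using TS by auto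
    then show False using big sj \<open>S = {}\<close> by simp
  qed
  have rpos: "rj > 0" unfolding rj using sj L cS by (auto intro!: divide_pos_pos mult_pos_pos)
  define B where "B = {y \<in> space torus_measure. \<forall>i\<in>S. circ_dist (y i) (y0 i) < rj}"
  define SG where "SG = {y\<in>space torus_measure. sj / 2 \<le> \<bar>G (sub_embed S x y) - G (sub_embed T x y)\<bar>}"
  have SGs: "SG \<in> sets torus_measure" unfolding SG_def
    using sub_embed_meas1[OF x, of S] sub_embed_meas1[OF x, of T] by measurable
  have close: "L * (\<Sum>i\<in>S. circ_dist (y i) (y0 i)) \<le> sj / 4" if "y \<in> B" for y
  proof -
    have "(\<Sum>i\<in>S. circ_dist (y i) (y0 i)) \<le> (\<Sum>i\<in>S. rj)"
      using that unfolding B_def by (intro sum_mono) (auto simp: less_imp_le)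
    also have "\<dots> = real (card S) * rj" by simp
    also have "\<dots> = sj / (4 * (L + 1))"
    proof -
      have "rj = (sj / (4 * (L + 1))) / real (card S)" unfolding rj by (simp add: divide_divide_eq_left)
      then show ?thesis using cS by simp
    qed
    finally have "L * (\<Sum>i\<in>S. circ_dist (y i) (y0 i)) \<le> L * (sj / (4 * (L + 1)))"
      using L by (intro mult_left_mono) auto
    also have "\<dots> \<le> sj / 4" using L sj by (simp add: field_simps)
    finally show ?thesis .
  qed
  have BF: "sj / 2 \<le> \<bar>F (sub_embed S x y) - F (sub_embed T x y)\<bar>" if "y \<in> B" for y
  proof -
    have y: "y \<in> space torus_measure" using that unfolding B_def by auto
    have d1: "\<bar>F (sub_embed S x y) - F (sub_embed S x y0)\<bar> \<le> L * (\<Sum>i\<in>S. circ_dist (sub_embed S x y i) (sub_embed S x y0 i))"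
      using x y y0 fin by (intro lipF sub_embed_space) (auto simp: sub_embed_def)
    have e1: "(\<Sum>i\<in>S. circ_dist (sub_embed S x y i) (sub_embed S x y0 i)) = (\<Sum>i\<in>S. circ_dist (y i) (y0 i))"
      by (intro sum.cong) (auto simp: sub_embed_def)
    have d2: "\<bar>F (sub_embed T x y) - F (sub_embed T x y0)\<bar> \<le> L * (\<Sum>i\<in>S. circ_dist (sub_embed T x y i) (sub_embed T x y0 i))"
      using x y y0 fin TS by (intro lipF sub_embed_space) (auto simp: sub_embed_def)
    have e2: "(\<Sum>i\<in>S. circ_dist (sub_embed T x y i) (sub_embed T x y0 i)) \<le> (\<Sum>i\<in>S. circ_dist (y i) (y0 i))"
      by (intro sum_mono) (auto simp: sub_embed_def circ_dist_self circ_dist_nonneg)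
    have "L * (\<Sum>i\<in>S. circ_dist (sub_embed T x y i) (sub_embed T x y0 i)) \<le> L * (\<Sum>i\<in>S. circ_dist (y i) (y0 i))"
      using e2 L by (intro mult_left_mono) auto
    then have d2': "\<bar>F (sub_embed T x y) - F (sub_embed T x y0)\<bar> \<le> L * (\<Sum>i\<in>S. circ_dist (y i) (y0 i))"
      using d2 by linarith
    have d1': "\<bar>F (sub_embed S x y) - F (sub_embed S x y0)\<bar> \<le> L * (\<Sum>i\<in>S. circ_dist (y i) (y0 i))"
      using d1 e1 by simp
    show ?thesis using absarith[OF d1' d2' close[OF that] big] .
  qed
  have "AE y in torus_measure. y \<in> B \<longrightarrow> y \<in> SG"
    using ae
  proof (eventually_elim)
    case (elim y)
    show ?case
    proof
      assume yB: "y \<in> B"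
      then have y: "y \<in> space torus_measure" unfolding B_def by auto
      have "F (sub_embed S x y) = G (sub_embed S x y)" using elim x y by (intro FG sub_embed_space) auto
      moreover have "F (sub_embed T x y) = G (sub_embed T x y)" using elim x y by (intro FG sub_embed_space) auto
      ultimately show "y \<in> SG" using BF[OF yB] y unfolding SG_def by auto
    qed
  qed
  then have "emeasure torus_measure B \<le> emeasure torus_measure SG" using SGs by (rule emeasure_mono_AE)
  moreover have "ennreal bj \<le> emeasure torus_measure B"
    unfolding B_def bj using box_measure[OF fin y0 rpos] .
  ultimately show False using V unfolding SG_def by simp
qed

lemma null_preimage:
  "AE z in torus_measure \<Otimes>\<^sub>M torus_measure. sub_embed S (fst z) (snd z) \<notin> N0"
proof -
  have "AE x in torus_measure. x \<notin> N0" using N0 by (rule AE_not_in)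
  then have "AE x in distr (torus_measure \<Otimes>\<^sub>M torus_measure) torus_measure (\<lambda>z. sub_embed S (fst z) (snd z)). x \<notin> N0"
    by (subst sub_embed_distr)
  then show ?thesis by (rule AE_distrD[OF sub_embed_meas])
qed

lemma to_sub:
  assumes x: "x \<in> space torus_measure"
    and ae: "AE y in torus_measure. sub_embed A x y \<notin> N0 \<and> \<bar>G (sub_embed A x y) - c\<bar> < e"
  shows "AE z in Pi\<^sub>M A (\<lambda>_. circle_measure). \<bar>F (sub_embed A x z) - c\<bar> < e"
proof -
  have N0s[measurable]: "N0 \<in> sets torus_measure" using N0 by auto
  have d: "distr torus_measure (Pi\<^sub>M A (\<lambda>_. circle_measure)) (\<lambda>\<omega>. \<lambda>n\<in>A. \<omega> n) = Pi\<^sub>M A (\<lambda>_. circle_measure)"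
    using distr_PiM_reindex[of UNIV "\<lambda>_. circle_measure" id A] prob_circle unfolding torus_measure_def by simp
  have rm[measurable]: "(\<lambda>\<omega>. \<lambda>n\<in>A. \<omega> n) \<in> measurable torus_measure (Pi\<^sub>M A (\<lambda>_. circle_measure))"
    unfolding torus_measure_def by measurable
  note sm[measurable] = sub_embed_measA[OF x, of A]
  have Qs: "{z \<in> space (Pi\<^sub>M A (\<lambda>_. circle_measure)). sub_embed A x z \<notin> N0 \<and> \<bar>G (sub_embed A x z) - c\<bar> < e} \<in> sets (Pi\<^sub>M A (\<lambda>_. circle_measure))"
    by measurable
  have re: "sub_embed A x (\<lambda>n\<in>A. y n) = sub_embed A x y" for y by (auto simp: sub_embed_def)
  have "AE z in distr torus_measure (Pi\<^sub>M A (\<lambda>_. circle_measure)) (\<lambda>\<omega>. \<lambda>n\<in>A. \<omega> n). sub_embed A x z \<notin> N0 \<and> \<bar>G (sub_embed A x z) - c\<bar> < e"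
    using ae by (subst AE_distr_iff[OF rm Qs]) (simp add: re)
  then have "AE z in Pi\<^sub>M A (\<lambda>_. circle_measure). sub_embed A x z \<notin> N0 \<and> \<bar>G (sub_embed A x z) - c\<bar> < e"
    unfolding d .
  then show ?thesis
  proof (rule AE_mp[OF _ AE_I2[OF impI]])
    fix z assume z: "z \<in> space (Pi\<^sub>M A (\<lambda>_. circle_measure))"
      and h: "sub_embed A x z \<notin> N0 \<and> \<bar>G (sub_embed A x z) - c\<bar> < e"
    have "sub_embed A x z \<in> space torus_measure"
      using z x by (auto simp: space_torus space_PiM space_circle sub_embed_def PiE_iff)
    then show "\<bar>F (sub_embed A x z) - c\<bar> < e" using h FG by simp
  qed
qed

lemma main_eps:
  fixes \<epsilon> c :: real
  assumes eps: "0 < \<epsilon>" and cpos: "emeasure torus_measure {x\<in>space torus_measure. \<bar>G x - c\<bar> < \<epsilon>/4} > 0"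
  shows "\<exists>A b. infinite A \<and> b \<in> space torus_measure \<and>
      (AE z in Pi\<^sub>M A (\<lambda>_. circle_measure). \<bar>F (sub_embed A b z) - c\<bar> < \<epsilon>)"
proof -
  interpret PP: pair_prob_space torus_measure torus_measure
    by (simp add: pair_prob_space_def pair_sigma_finite_def prob_torus prob_space_imp_sigma_finite)
  define \<rho> where "\<rho> = measure torus_measure {x\<in>space torus_measure. \<bar>G x - c\<bar> < \<epsilon>/4}"
  have rho: "\<rho> > 0" using cpos by (simp add: \<rho>_def TP.emeasure_eq_measure)
  define \<eta> where "\<eta> = \<rho> / 2"
  have eta: "\<eta> > 0" using rho by (simp add: \<eta>_def)
  define s where "s j = \<epsilon> / 8 * (1/2)^j" for j :: nat
  have spos: "s j > 0" for j using eps by (simp add: s_def)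
  have sle: "s j \<le> \<epsilon> / 8" for j
  proof -
    have "(1/2::real)^j \<le> 1" by (simp add: power_le_one)
    then show ?thesis unfolding s_def using eps by (simp add: mult_left_le)
  qed
  define r where "r j = s j / (4 * (L + 1) * real (Suc j))" for j
  define \<beta> where "\<beta> j = min (r j) (1/2) ^ Suc j" for j
  have rpos: "r j > 0" for j using spos[of j] L by (simp add: r_def)
  have bpos: "\<beta> j > 0" for j using rpos[of j] by (simp add: \<beta>_def)
  have ble: "\<beta> j \<le> 1" for j
  proof -
    have "min (r j) (1/2) \<le> 1" by simp
    then show ?thesis unfolding \<beta>_def using rpos[of j] by (intro power_le_one) auto
  qed
  define \<kappa> where "\<kappa> j = \<eta> * \<beta> j / 2 ^ Suc j" for j
  have kpos: "\<kappa> j > 0" for j using eta bpos[of j] by (simp add: \<kappa>_def)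
  have kle: "\<kappa> j \<le> \<eta> / 2 ^ Suc j" for j
    using ble[of j] eta unfolding \<kappa>_def by (simp add: divide_right_mono mult_left_le)
  define ok where "ok j N \<longleftrightarrow> (\<forall>(\<Omega>::((nat \<Rightarrow> real) \<times> (nat \<Rightarrow> real)) measure) \<phi> \<psi>. \<phi> \<in> measurable \<Omega> torus_measure \<longrightarrow> \<psi> \<in> measurable \<Omega> torus_measure \<longrightarrow>
     distr \<Omega> torus_measure \<phi> = torus_measure \<longrightarrow> distr \<Omega> torus_measure \<psi> = torus_measure \<longrightarrow>
     (\<forall>\<omega>\<in>space \<Omega>. \<forall>i<N. \<phi> \<omega> i = \<psi> \<omega> i) \<longrightarrow>
     emeasure \<Omega> {\<omega>\<in>space \<Omega>. s j / 2 \<le> \<bar>G (\<phi> \<omega>) - G (\<psi> \<omega>)\<bar>} \<le> ennreal (\<kappa> j))" for j N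
  have "\<forall>j. \<exists>N. ok j N"
    unfolding ok_def using spos kpos by (intro allI approx_fun[OF Gm Gb]) auto
  then obtain Nf where Nf0: "\<forall>j. ok j (Nf j)" using choice by blast
  have Nf: "emeasure \<Omega> {\<omega>\<in>space \<Omega>. s j / 2 \<le> \<bar>G (\<phi> \<omega>) - G (\<psi> \<omega>)\<bar>} \<le> ennreal (\<kappa> j)"
    if "\<phi> \<in> measurable \<Omega> torus_measure" "\<psi> \<in> measurable \<Omega> torus_measure"
     "distr \<Omega> torus_measure \<phi> = torus_measure" "distr \<Omega> torus_measure \<psi> = torus_measure"
     "\<forall>\<omega>\<in>space \<Omega>. \<forall>i<Nf j. \<phi> \<omega> i = \<psi> \<omega> i"
    for j and \<Omega> :: "((nat \<Rightarrow> real) \<times> (nat \<Rightarrow> real)) measure" and \<phi> \<psi>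
    using Nf0 that unfolding ok_def by blast
  define a where "a j = j + (\<Sum>i\<le>j. Nf i)" for j
  have a_mono: "strict_mono a" unfolding a_def by (intro strict_monoI_Suc) simp
  have a_ge: "Nf j \<le> a j" for j unfolding a_def by (simp add: member_le_sum trans_le_add2)
  have a_inj: "inj a" using a_mono by (rule strict_mono_imp_inj_on)
  have card_a: "card (a ` {..<J}) = J" for J using a_inj by (simp add: card_image inj_on_subset)
  define w where "w J z = sub_embed (a ` {..<J}) (fst z) (snd z)" for J z
  define winf where "winf z = sub_embed (range a) (fst z) (snd z)" for z
  have w_meas[measurable]: "w J \<in> measurable (torus_measure \<Otimes>\<^sub>M torus_measure) torus_measure" for J
    unfolding w_def by (rule sub_embed_meas)
  have winf_meas[measurable]: "winf \<in> measurable (torus_measure \<Otimes>\<^sub>M torus_measure) torus_measure"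
    unfolding winf_def by (rule sub_embed_meas)
  have w_distr: "distr (torus_measure \<Otimes>\<^sub>M torus_measure) torus_measure (w J) = torus_measure" for J
    unfolding w_def by (rule sub_embed_distr)
  have winf_distr: "distr (torus_measure \<Otimes>\<^sub>M torus_measure) torus_measure winf = torus_measure"
    unfolding winf_def by (rule sub_embed_distr)
  have agree1: "w (Suc j) z i = w j z i" if "i < a j" for i j z
  proof -
    have "i \<in> a ` {..<Suc j} \<longleftrightarrow> i \<in> a ` {..<j}"
      using that by (auto simp: less_Suc_eq)
    then show ?thesis unfolding w_def sub_embed_def by simp
  qed
  have agree2: "winf z i = w J z i" if "i < a J" for i J z
  proof -
    have "i \<in> range a \<longleftrightarrow> i \<in> a ` {..<J}"
      using that a_mono by (auto simp: strict_mono_less)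
    then show ?thesis unfolding w_def winf_def sub_embed_def by simp
  qed
  define BA where "BA j = {z\<in>space (torus_measure \<Otimes>\<^sub>M torus_measure). s j / 2 \<le> \<bar>G (w (Suc j) z) - G (w j z)\<bar>}" for j
  have BA_sets[measurable]: "BA j \<in> sets (torus_measure \<Otimes>\<^sub>M torus_measure)" for j unfolding BA_def by measurable
  have BA_le: "emeasure (torus_measure \<Otimes>\<^sub>M torus_measure) (BA j) \<le> ennreal (\<kappa> j)" for j
    unfolding BA_def
  proof (rule Nf[OF w_meas w_meas w_distr w_distr], intro ballI allI impI)
    fix z i assume "i < Nf j" then show "w (Suc j) z i = w j z i" using a_ge[of j] by (intro agree1) simp
  qed
  define V where "V j x = emeasure torus_measure (Pair x -` BA j)" for j x
  have V_meas[measurable]: "V j \<in> borel_measurable torus_measure" for j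
    unfolding V_def by (rule PP.measurable_emeasure_Pair1) measurable
  have V_int: "(\<integral>\<^sup>+x. V j x \<partial>torus_measure) = emeasure (torus_measure \<Otimes>\<^sub>M torus_measure) (BA j)" for j
    unfolding V_def by (rule sigma_finite_measure.emeasure_pair_measure_alt[OF prob_space_imp_sigma_finite[OF prob_torus], symmetric]) measurable
  have markov: "measure torus_measure {x\<in>space torus_measure. ennreal (\<beta> j) \<le> V j x} \<le> \<eta> / 2 ^ Suc j" for j
  proof -
    let ?S = "{x\<in>space torus_measure. ennreal (\<beta> j) \<le> V j x}"
    have Ss: "?S \<in> sets torus_measure" by measurable
    have "(\<integral>\<^sup>+x. ennreal (\<beta> j) * indicator ?S x \<partial>torus_measure) \<le> (\<integral>\<^sup>+x. V j x \<partial>torus_measure)"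
      by (intro nn_integral_mono) (auto split: split_indicator)
    then have "ennreal (\<beta> j) * emeasure torus_measure ?S \<le> ennreal (\<kappa> j)"
      using V_int[of j] BA_le[of j] Ss by (simp add: nn_integral_cmult_indicator)
    then have "ennreal (\<beta> j * measure torus_measure ?S) \<le> ennreal (\<kappa> j)"
      using bpos[of j] by (simp add: TP.emeasure_eq_measure ennreal_mult)
    then have "\<beta> j * measure torus_measure ?S \<le> \<kappa> j" using kpos[of j] by (simp add: ennreal_le_iff)
    then have "measure torus_measure ?S \<le> \<kappa> j / \<beta> j" using bpos[of j] by (simp add: field_simps)
    also have "\<kappa> j / \<beta> j = \<eta> / 2 ^ Suc j" unfolding \<kappa>_def using bpos[of j] by simp
    finally show ?thesis .
  qed
  define G1 where "G1 = {x\<in>space torus_measure. \<forall>j. V j x < ennreal (\<beta> j)}"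
  have G1s[measurable]: "G1 \<in> sets torus_measure" unfolding G1_def by measurable
  have G1c: "measure torus_measure (space torus_measure - G1) \<le> \<eta>"
  proof -
    have eq: "space torus_measure - G1 = (\<Union>j. {x\<in>space torus_measure. ennreal (\<beta> j) \<le> V j x})"
      unfolding G1_def by (auto simp: not_less) (meson leD)
    have eqf: "(\<lambda>j. \<eta> / 2 ^ Suc j) = (\<lambda>j. \<eta> / 2 * (1/2)^j)" by (simp add: power_one_over)
    have gs: "(\<lambda>j. \<eta> / 2 * (1/2::real)^j) sums (\<eta> / 2 * (1 / (1 - 1/2)))"
      by (intro sums_mult geometric_sums) simp
    have sm: "summable (\<lambda>j. \<eta> / 2 ^ Suc j)" unfolding eqf using gs by (rule sums_summable)
    have sm2: "summable (\<lambda>j. measure torus_measure {x\<in>space torus_measure. ennreal (\<beta> j) \<le> V j x})"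
      by (rule summable_comparison_test[OF _ sm]) (use markov in auto)
    have "measure torus_measure (space torus_measure - G1) \<le> (\<Sum>j. measure torus_measure {x\<in>space torus_measure. ennreal (\<beta> j) \<le> V j x})"
      unfolding eq by (intro TP.finite_measure_subadditive_countably sm2) auto
    also have "\<dots> \<le> (\<Sum>j. \<eta> / 2 ^ Suc j)" by (intro suminf_le sm2 sm markov)
    also have "(\<Sum>j. \<eta> / 2 ^ Suc j) = \<eta>"
    proof -
      show ?thesis using eqf gs by (simp add: sums_iff)
    qed
    finally show ?thesis .
  qed
  have stepC: "\<bar>F (w J (x, y)) - F x\<bar> \<le> (\<Sum>j<J. s j)"
    if x: "x \<in> space torus_measure" "x \<notin> N0" "x \<in> G1"
      and ae: "\<forall>j. AE y in torus_measure. w (Suc j) (x, y) \<notin> N0 \<and> w j (x, y) \<notin> N0"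
      and y: "y \<in> space torus_measure" for x y J
  proof (induction J)
    case 0 then show ?case by (simp add: w_def)
  next
    case (Suc J)
    have step: "\<bar>F (w (Suc J) (x, y)) - F (w J (x, y))\<bar> < s J"
    proof -
      have T: "a ` {..<J} \<subseteq> a ` {..<Suc J}" by auto
      have VJ: "V J x < ennreal (\<beta> J)" using x(3) unfolding G1_def by auto
      have Veq: "V J x = emeasure torus_measure {y\<in>space torus_measure. s J / 2 \<le> \<bar>G (sub_embed (a ` {..<Suc J}) x y) - G (sub_embed (a ` {..<J}) x y)\<bar>}"
        unfolding V_def BA_def w_def using x(1) by (intro arg_cong[where f="emeasure torus_measure"]) (auto simp: space_pair_measure)
      have rr: "r J = s J / (4 * (L + 1) * real (card (a ` {..<Suc J})))" by (simp add: r_def card_a)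
      have bb: "\<beta> J = min (r J) (1/2) ^ card (a ` {..<Suc J})" by (simp add: \<beta>_def card_a)
      have ae': "AE y in torus_measure. sub_embed (a ` {..<Suc J}) x y \<notin> N0 \<and> sub_embed (a ` {..<J}) x y \<notin> N0"
        using ae[rule_format, of J] by (simp add: w_def)
      show ?thesis using sup_step[OF x(1) finite_imageI[OF finite_lessThan] T spos rr bb _ ae' y] VJ Veq
        by (simp add: w_def)
    qed
    then show ?case using Suc.IH by simp
  qed
  define E where "E = {z\<in>space (torus_measure \<Otimes>\<^sub>M torus_measure). (\<forall>J. \<bar>G (w J z) - G (fst z)\<bar> < \<epsilon>/4) \<and> \<epsilon>/2 < \<bar>G (winf z) - G (fst z)\<bar>}"
  have Es[measurable]: "E \<in> sets (torus_measure \<Otimes>\<^sub>M torus_measure)" unfolding E_def by measurable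
  have Ele: "emeasure (torus_measure \<Otimes>\<^sub>M torus_measure) E \<le> ennreal (\<eta> / 2 ^ Suc J)" for J
  proof -
    have "E \<subseteq> {z\<in>space (torus_measure \<Otimes>\<^sub>M torus_measure). s J / 2 \<le> \<bar>G (winf z) - G (w J z)\<bar>}"
    proof
      fix z assume "z \<in> E"
      then have z: "z \<in> space (torus_measure \<Otimes>\<^sub>M torus_measure)" "\<bar>G (w J z) - G (fst z)\<bar> < \<epsilon>/4"
        "\<epsilon>/2 < \<bar>G (winf z) - G (fst z)\<bar>" unfolding E_def by auto
      have "s J / 2 \<le> \<epsilon> / 4" using sle[of J] eps by simp
      moreover have "\<epsilon>/4 < \<bar>G (winf z) - G (w J z)\<bar>"
        using z(2,3) by (simp add: abs_if split: if_split_asm) linarith?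
      ultimately show "z \<in> {z\<in>space (torus_measure \<Otimes>\<^sub>M torus_measure). s J / 2 \<le> \<bar>G (winf z) - G (w J z)\<bar>}"
        using z(1) by auto
    qed
    then have "emeasure (torus_measure \<Otimes>\<^sub>M torus_measure) E \<le> emeasure (torus_measure \<Otimes>\<^sub>M torus_measure) {z\<in>space (torus_measure \<Otimes>\<^sub>M torus_measure). s J / 2 \<le> \<bar>G (winf z) - G (w J z)\<bar>}"
      by (intro emeasure_mono) measurable
    also have "\<dots> \<le> ennreal (\<kappa> J)"
    proof (rule Nf[OF winf_meas w_meas winf_distr w_distr], intro ballI allI impI)
      fix z i assume "i < Nf J" then show "winf z i = w J z i" using a_ge[of J] by (intro agree2) simp
    qed
    also have "\<dots> \<le> ennreal (\<eta> / 2 ^ Suc J)" using kle[of J] by (intro ennreal_leI)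
    finally show ?thesis .
  qed
  have E0: "E \<in> null_sets (torus_measure \<Otimes>\<^sub>M torus_measure)"
  proof -
    define m where "m = measure (torus_measure \<Otimes>\<^sub>M torus_measure) E"
    have em: "emeasure (torus_measure \<Otimes>\<^sub>M torus_measure) E = ennreal m"
      unfolding m_def by (simp add: PP.emeasure_eq_measure)
    have mle: "m \<le> \<eta> / 2 ^ Suc J" for J using Ele[of J] eta unfolding em by (simp add: ennreal_le_iff)
    have "m \<le> 0"
    proof (rule ccontr)
      assume "\<not> m \<le> 0"
      then have "m / \<eta> > 0" using eta by simp
      then obtain J where "(1/2::real) ^ J < m / \<eta>" using real_arch_pow_inv[of "m / \<eta>" "1/2"] by auto
      then have "\<eta> * (1/2) ^ J < m" using eta by (simp add: field_simps)
      moreover have "\<eta> / 2 ^ Suc J \<le> \<eta> * (1/2) ^ J" using eta by (simp add: power_one_over field_simps)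
      ultimately show False using mle[of J] by linarith
    qed
    then have "emeasure (torus_measure \<Otimes>\<^sub>M torus_measure) E = 0" unfolding em by (simp add: ennreal_eq_0_iff)
    then show ?thesis using Es by auto
  qed
  have aeE: "AE z in torus_measure \<Otimes>\<^sub>M torus_measure. (\<forall>J. w J z \<notin> N0) \<and> winf z \<notin> N0 \<and> fst z \<notin> N0 \<and> z \<notin> E"
  proof -
    have "\<forall>J. AE z in torus_measure \<Otimes>\<^sub>M torus_measure. w J z \<notin> N0"
      unfolding w_def by (intro allI null_preimage)
    then have 1: "AE z in torus_measure \<Otimes>\<^sub>M torus_measure. \<forall>J. w J z \<notin> N0"
      by (simp add: AE_all_countable)
    have 2: "AE z in torus_measure \<Otimes>\<^sub>M torus_measure. winf z \<notin> N0"
      unfolding winf_def by (rule null_preimage)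
    have 3: "AE z in torus_measure \<Otimes>\<^sub>M torus_measure. fst z \<notin> N0"
      using null_preimage[of "{}"] by simp
    have 4: "AE z in torus_measure \<Otimes>\<^sub>M torus_measure. z \<notin> E" using E0 by (rule AE_not_in)
    show ?thesis using 1 2 3 4 by eventually_elim auto
  qed
  then have aex: "AE x in torus_measure. AE y in torus_measure. (\<forall>J. w J (x, y) \<notin> N0) \<and> winf (x, y) \<notin> N0 \<and> x \<notin> N0 \<and> (x, y) \<notin> E"
    using PP.AE_pair by fastforce
  define R where "R x \<longleftrightarrow> (AE z in Pi\<^sub>M (range a) (\<lambda>_. circle_measure). \<bar>F (sub_embed (range a) x z) - c\<bar> < \<epsilon>)" for x
  define X where "X = {x\<in>space torus_measure. x \<in> G1 \<and> \<bar>G x - c\<bar> < \<epsilon>/4}"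
  have Xs: "X \<in> sets torus_measure" unfolding X_def by measurable
  have key: "AE x in torus_measure. x \<in> X \<longrightarrow> R x"
    using aex
  proof (eventually_elim)
    case (elim x)
    show ?case
    proof
      assume xX: "x \<in> X"
      then have xs: "x \<in> space torus_measure" and xG1: "x \<in> G1" and xc: "\<bar>G x - c\<bar> < \<epsilon>/4" unfolding X_def by auto
      have xN: "x \<notin> N0" using elim TP.AE_const by (metis (mono_tags, lifting) AE_mp AE_I2)
      have aeW: "AE y in torus_measure. \<forall>J. w J (x, y) \<notin> N0" using elim by eventually_elim auto
      have aej: "\<forall>j. AE y in torus_measure. w (Suc j) (x, y) \<notin> N0 \<and> w j (x, y) \<notin> N0"
      proof
        fix j show "AE y in torus_measure. w (Suc j) (x, y) \<notin> N0 \<and> w j (x, y) \<notin> N0"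
          using aeW by eventually_elim auto
      qed
      have "AE y in torus_measure. sub_embed (range a) x y \<notin> N0 \<and> \<bar>G (sub_embed (range a) x y) - c\<bar> < \<epsilon>"
        using elim AE_space
      proof (eventually_elim)
        case (elim y)
        then have ys: "y \<in> space torus_measure" and nN: "\<forall>J. w J (x, y) \<notin> N0" "winf (x, y) \<notin> N0" "(x, y) \<notin> E" by auto
        have Fx: "F x = G x" using FG xs xN by simp
        have wsp: "w J (x, y) \<in> space torus_measure" for J unfolding w_def using xs ys by (simp add: sub_embed_space)
        have "\<bar>G (w J (x, y)) - G x\<bar> < \<epsilon>/4" for J
        proof -
          have "\<bar>F (w J (x, y)) - F x\<bar> \<le> (\<Sum>j<J. s j)" using stepC[OF xs xN xG1 aej ys] .
          also have "\<dots> < \<epsilon>/4" unfolding s_def using geom_partial[OF eps] .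
          finally show ?thesis using FG[OF wsp nN(1)[rule_format]] Fx by simp
        qed
        moreover have "(x, y) \<in> space (torus_measure \<Otimes>\<^sub>M torus_measure)" using xs ys by (simp add: space_pair_measure)
        ultimately have "\<bar>G (winf (x, y)) - G x\<bar> \<le> \<epsilon>/2" using nN(3) unfolding E_def by auto
        then have "\<bar>G (winf (x, y)) - c\<bar> < \<epsilon>" using xc eps by linarith
        then show ?case using nN(2) by (simp add: winf_def)
      qed
      then show "R x" unfolding R_def by (rule to_sub[OF xs])
    qed
  qed
  have Xpos: "emeasure torus_measure X > 0"
  proof -
    have "{x\<in>space torus_measure. \<bar>G x - c\<bar> < \<epsilon>/4} \<subseteq> X \<union> (space torus_measure - G1)" unfolding X_def by auto
    then have "\<rho> \<le> measure torus_measure (X \<union> (space torus_measure - G1))"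
      unfolding \<rho>_def using Xs by (intro TP.finite_measure_mono) auto
    also have "\<dots> \<le> measure torus_measure X + measure torus_measure (space torus_measure - G1)"
      using Xs by (intro measure_subadditive) (auto simp: TP.emeasure_eq_measure)
    finally have "\<rho> - \<eta> \<le> measure torus_measure X" using G1c by linarith
    then have "measure torus_measure X > 0" using rho unfolding \<eta>_def by linarith
    then show ?thesis by (simp add: TP.emeasure_eq_measure)
  qed
  obtain x where x: "x \<in> X" "R x"
  proof (rule ccontr)
    assume "\<not> thesis"
    then have "\<forall>x\<in>X. \<not> R x" using that by blast
    then have "AE x in torus_measure. x \<notin> X" using key by (auto elim!: AE_mp intro!: AE_I2)
    then have "emeasure torus_measure X = 0"
      using Xs by (subst (asm) AE_iff_measurable[OF _ refl]) (auto simp: Int_absorb1 sets.sets_into_space Collect_conj_eq[symmetric] Int_def[symmetric])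
    then show False using Xpos by simp
  qed
  have "infinite (range a)" using a_inj by (simp add: range_inj_infinite)
  moreover have "x \<in> space torus_measure" using x(1) unfolding X_def by auto
  ultimately show ?thesis using x(2) unfolding R_def by blast
qed

end

lemma clamp_lip: "\<bar>max (a-1) (min (a+1) u) - max (a-1) (min (a+1) v)\<bar> \<le> \<bar>u - v\<bar>" for a u v :: real
  by (simp add: abs_le_iff abs_if max_def min_def split: if_splits) linarith?

theorem theorem2:
  fixes p :: ereal and f :: "(nat \<Rightarrow> real) \<Rightarrow> real"
  assumes "1 < p"
    and "f \<in> borel_measurable (completion torus_measure)"
    and "torus_lipschitz p f"
  shows "\<exists>a::real. \<forall>\<epsilon>::real. \<epsilon> > 0 \<longrightarrow>
           (\<exists>A b. is_parallel_subtorus A b \<and>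
                  subtorus_Linf_norm A b (\<lambda>x. f x - a) < ennreal \<epsilon>)"
proof -
  obtain G0 where G0: "G0 \<in> borel_measurable torus_measure" "AE x in torus_measure. f x = G0 x"
    using completion_ex_borel_measurable_real[OF assms(2)] by blast
  obtain N0 where N0: "{x\<in>space torus_measure. \<not> f x = G0 x} \<subseteq> N0" "N0 \<in> null_sets torus_measure"
    using G0(2) by (auto elim!: AE_E)
  obtain L where L: "L \<ge> 0" and lip: "\<forall>x\<in>space torus_measure. \<forall>y\<in>space torus_measure.
        ennreal \<bar>f x - f y\<bar> \<le> ennreal L * torus_dist p x y"
    using assms(3) unfolding torus_lipschitz_def by blast
  obtain a where a: "\<And>e. e > 0 \<Longrightarrow> emeasure torus_measure {x\<in>space torus_measure. \<bar>G0 x - a\<bar> < e} > 0"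
    using support_point[OF G0(1)] by blast
  define F where "F x = max (a-1) (min (a+1) (f x))" for x
  define G where "G x = max (a-1) (min (a+1) (G0 x))" for x
  have Gm: "G \<in> borel_measurable torus_measure" unfolding G_def using G0(1) by measurable
  have Gb: "\<bar>G x\<bar> \<le> \<bar>a\<bar> + 1" for x unfolding G_def by (simp add: abs_le_iff max_def min_def split: abs_split)
  have lipF: "\<bar>F x - F y\<bar> \<le> L * (\<Sum>i\<in>Q. circ_dist (x i) (y i))"
    if "x \<in> space torus_measure" "y \<in> space torus_measure" "finite Q" "\<And>i. i \<notin> Q \<Longrightarrow> x i = y i" for x y Q
  proof -
    have "\<bar>F x - F y\<bar> \<le> \<bar>f x - f y\<bar>" unfolding F_def by (rule clamp_lip)
    also have "\<dots> \<le> L * (\<Sum>i\<in>Q. circ_dist (x i) (y i))"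
      by (rule lipschitz_finite[OF assms(1) L lip that])
    finally show ?thesis .
  qed
  have FG: "F x = G x" if "x \<in> space torus_measure" "x \<notin> N0" for x
  proof -
    have "f x = G0 x" using N0(1) that by auto
    then show ?thesis unfolding F_def G_def by simp
  qed
  show ?thesis
  proof (intro exI[of _ a] allI impI)
    fix \<epsilon> :: real assume eps: "\<epsilon> > 0"
    define e where "e = min \<epsilon> 1 / 2"
    have e: "0 < e" "e \<le> 1/2" "e < \<epsilon>" using eps unfolding e_def by auto
    have "{x\<in>space torus_measure. \<bar>G0 x - a\<bar> < e/4} \<subseteq> {x\<in>space torus_measure. \<bar>G x - a\<bar> < e/4}"
      using e unfolding G_def by (auto simp: max_def min_def split: abs_split)
    then have "emeasure torus_measure {x\<in>space torus_measure. \<bar>G0 x - a\<bar> < e/4} \<le> emeasure torus_measure {x\<in>space torus_measure. \<bar>G x - a\<bar> < e/4}"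
      using Gm by (intro emeasure_mono) measurable
    then have pos: "emeasure torus_measure {x\<in>space torus_measure. \<bar>G x - a\<bar> < e/4} > 0"
      using a[of "e/4"] e by simp
    obtain A b where Ab: "infinite A" "b \<in> space torus_measure"
      "AE z in Pi\<^sub>M A (\<lambda>_. circle_measure). \<bar>F (sub_embed A b z) - a\<bar> < e"
      using main_eps[OF L lipF Gm Gb N0(2) FG e(1) pos] by blast
    have "AE z in Pi\<^sub>M A (\<lambda>_. circle_measure). ennreal \<bar>f (sub_embed A b z) - a\<bar> \<le> ennreal e"
      using Ab(3)
    proof (eventually_elim)
      case (elim z)
      then have "\<bar>f (sub_embed A b z) - a\<bar> < e" using e unfolding F_def by (auto simp: max_def min_def split: if_splits)
      then show ?case by (intro ennreal_leI) simp
    qed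
    then have "subtorus_Linf_norm A b (\<lambda>x. f x - a) \<le> ennreal e"
      unfolding subtorus_Linf_norm_def by (intro Inf_lower) simp
    also have "ennreal e < ennreal \<epsilon>" using e by (simp add: ennreal_lessI)
    finally have "subtorus_Linf_norm A b (\<lambda>x. f x - a) < ennreal \<epsilon>" .
    moreover have "is_parallel_subtorus A b"
      unfolding is_parallel_subtorus_def using Ab(1,2) by (auto simp: space_torus)
    ultimately show "\<exists>A b. is_parallel_subtorus A b \<and> subtorus_Linf_norm A b (\<lambda>x. f x - a) < ennreal \<epsilon>"
      by blast
  qed
qed


end
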